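(* Let $n$ be a natural number with $2^k\le n<2^{k+1}$, and let $G$ be the graph with $n$ vertices obtained as the induced subgraph of the hypercube $Q_{k+1}$ on the vertices whose labels are the $(k+1)$-term binary representations of $0,1,\dots,n-1$. Then for any two vertices $u$ and $v$ of $G$, perfect state transfer from $u$ to $v$ is possible by at most two CQC-hoppings: either there is a spanning subgraph $H$ of $G$ and a time $t_0>0$ with $|\langle v|\exp(-it_0A(H))|u\rangle|=1$, or there exist a vertex $w$ of $G$, spanning subgraphs $H_1,H_2$ of $G$ and times $t_1,t_2>0$ with $|\langle w|\exp(-it_1A(H_1))|u\rangle|=1$ and $|\langle v|\exp(-it_2A(H_2))|w\rangle|=1$.
   Context: The hypercube $Q_m$ is the graph with vertex set $\{0,1\}^m$, two vertices being adjacent if and only if their labels have Hamming distance $1$. A spanning subgraph $H$ of $G$ has $V(H)=V(G)$ and $E(H)\subseteq E(G)$. For a graph $H$ with adjacency matrix $A(H)$, associate to each vertex $x$ the standard basis vector $|x\rangle\in\mathbb{C}^{|V(H)|}$; $H$ has perfect state transfer from $a$ to $b$ at time $t$ if $|\langle b|\exp(-itA(H))|a\rangle|=1$. A CQC-hopping from $a$ to $b$ on $G$ consists of switching off edges of $G$ to obtain a spanning subgraph $H$, performing perfect state transfer from $a$ to $b$ in $H$, and switching the removed edges back on. *)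

theory Defs
  imports Complex_Main "Jordan_Normal_Form.Matrix"
begin

definition hypercube_adj :: "nat \<Rightarrow> nat \<Rightarrow> nat \<Rightarrow> bool" where
  "hypercube_adj k x y \<longleftrightarrow> card {i. i < Suc k \<and> bit x i \<noteq> bit y i} = 1"

definition G_adj :: "nat \<Rightarrow> nat \<Rightarrow> nat \<Rightarrow> nat \<Rightarrow> bool" where
  "G_adj n k x y \<longleftrightarrow> x < n \<and> y < n \<and> hypercube_adj k x y"

definition spanning_subgraph :: "nat \<Rightarrow> nat \<Rightarrow> (nat \<Rightarrow> nat \<Rightarrow> bool) \<Rightarrow> bool" where
  "spanning_subgraph n k E \<longleftrightarrow> (\<forall>x y. E x y \<longrightarrow> G_adj n k x y) \<and> (\<forall>x y. E x y \<longrightarrow> E y x)"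

definition adj_matrix :: "nat \<Rightarrow> (nat \<Rightarrow> nat \<Rightarrow> bool) \<Rightarrow> complex mat" where
  "adj_matrix n E = mat n n (\<lambda>(i, j). if E i j then 1 else 0)"

definition mat_exp :: "complex mat \<Rightarrow> complex mat" where
  "mat_exp A = mat (dim_row A) (dim_col A) (\<lambda>(i, j). \<Sum>m. (A ^\<^sub>m m) $$ (i, j) / of_nat (fact m))"

definition pst :: "nat \<Rightarrow> (nat \<Rightarrow> nat \<Rightarrow> bool) \<Rightarrow> nat \<Rightarrow> nat \<Rightarrow> real \<Rightarrow> bool" where
  "pst n E a b t \<longleftrightarrow>
     cmod (mat_exp ((- (\<i> * complex_of_real t)) \<cdot>\<^sub>m adj_matrix n E) $$ (b, a)) = 1"

end

theory Submission imports Defs begin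

lemma spectral:
  fixes B :: "complex mat" and \<phi> :: "'t \<Rightarrow> nat \<Rightarrow> complex" and \<mu> :: "'t \<Rightarrow> complex"
  assumes B: "B \<in> carrier_mat n n" and F: "finite F"
    and eig: "\<And>T x. T \<in> F \<Longrightarrow> x < n \<Longrightarrow> (\<Sum>y<n. B $$ (x,y) * \<phi> T y) = \<mu> T * \<phi> T x"
    and dec: "\<And>y. y < n \<Longrightarrow> (\<Sum>T\<in>F. \<phi> T y) = (if y = u then 1 else 0)"
    and u: "u < n" and v: "v < n"
  shows "mat_exp B $$ (v,u) = (\<Sum>T\<in>F. exp (\<mu> T) * \<phi> T v)"
proof -
  have pw: "(\<Sum>y<n. (B ^\<^sub>m m) $$ (x,y) * \<phi> T y) = \<mu> T ^ m * \<phi> T x"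
    if T: "T \<in> F" and x: "x < n" for T m x
    using x
  proof (induction m arbitrary: x)
    case 0
    have "(\<Sum>y<n. (B ^\<^sub>m 0) $$ (x,y) * \<phi> T y) = (\<Sum>y<n. (if x = y then \<phi> T y else 0))"
      using B 0 by (intro sum.cong) auto
    also have "\<dots> = \<phi> T x" using 0 by simp
    finally show ?case by simp
  next
    case (Suc m)
    have "(\<Sum>y<n. (B ^\<^sub>m Suc m) $$ (x,y) * \<phi> T y)
        = (\<Sum>y<n. (\<Sum>l<n. (B ^\<^sub>m m) $$ (x,l) * B $$ (l,y)) * \<phi> T y)"
    proof (intro sum.cong refl)
      fix y assume "y \<in> {..<n}"
      then have "y < n" by simp
      then show "(B ^\<^sub>m Suc m) $$ (x,y) * \<phi> T y = (\<Sum>l<n. (B ^\<^sub>m m) $$ (x,l) * B $$ (l,y)) * \<phi> T y"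
        using B Suc.prems by (simp add: scalar_prod_def atLeast0LessThan)
    qed
    also have "\<dots> = (\<Sum>l<n. (B ^\<^sub>m m) $$ (x,l) * (\<Sum>y<n. B $$ (l,y) * \<phi> T y))"
      unfolding sum_distrib_right sum_distrib_left mult.assoc by (rule sum.swap)
    also have "\<dots> = (\<Sum>l<n. (B ^\<^sub>m m) $$ (x,l) * (\<mu> T * \<phi> T l))"
      using eig[OF T] by (intro sum.cong) auto
    also have "\<dots> = \<mu> T * (\<Sum>l<n. (B ^\<^sub>m m) $$ (x,l) * \<phi> T l)"
      by (simp add: sum_distrib_left mult.assoc mult.left_commute)
    also have "\<dots> = \<mu> T ^ Suc m * \<phi> T x" using Suc by simp
    finally show ?case .
  qed
  have ent: "(B ^\<^sub>m m) $$ (v,u) = (\<Sum>T\<in>F. \<mu> T ^ m * \<phi> T v)" for m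
  proof -
    have "(\<Sum>y<n. (B ^\<^sub>m m) $$ (v,y) * (if y = u then 1 else 0)) = (\<Sum>y<n. if y = u then (B ^\<^sub>m m) $$ (v,y) else 0)"
      by (intro sum.cong) auto
    then have "(B ^\<^sub>m m) $$ (v,u) = (\<Sum>y<n. (B ^\<^sub>m m) $$ (v,y) * (if y = u then 1 else 0))"
      using u by simp
    also have "\<dots> = (\<Sum>y<n. (B ^\<^sub>m m) $$ (v,y) * (\<Sum>T\<in>F. \<phi> T y))"
      using dec by (intro sum.cong) auto
    also have "\<dots> = (\<Sum>T\<in>F. (\<Sum>y<n. (B ^\<^sub>m m) $$ (v,y) * \<phi> T y))"
      unfolding sum_distrib_left by (rule sum.swap)
    also have "\<dots> = (\<Sum>T\<in>F. \<mu> T ^ m * \<phi> T v)"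
      using pw v by (intro sum.cong) auto
    finally show ?thesis .
  qed
  have s: "(\<lambda>m. \<mu> T ^ m * \<phi> T v / of_nat (fact m)) sums (exp (\<mu> T) * \<phi> T v)" for T
  proof -
    have "(\<lambda>m. \<phi> T v * (\<mu> T ^ m /\<^sub>R fact m)) sums (\<phi> T v * exp (\<mu> T))"
      by (intro sums_mult exp_converges)
    then show ?thesis by (simp add: scaleR_conv_of_real field_simps)
  qed
  have "(\<lambda>m. \<Sum>T\<in>F. \<mu> T ^ m * \<phi> T v / of_nat (fact m)) sums (\<Sum>T\<in>F. exp (\<mu> T) * \<phi> T v)"
    by (intro sums_sum s)
  then have "(\<lambda>m. (B ^\<^sub>m m) $$ (v,u) / of_nat (fact m)) sums (\<Sum>T\<in>F. exp (\<mu> T) * \<phi> T v)"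
    by (simp add: ent sum_divide_distrib)
  then show ?thesis using B u v unfolding mat_exp_def by (simp add: sums_iff)
qed

lemma high_bits: "(x::nat) < 2^m \<Longrightarrow> m \<le> j \<Longrightarrow> \<not> bit x j"
proof -
  assume a: "x < 2^m" "m \<le> j"
  then have "take_bit m x = x" by (simp add: take_bit_nat_eq_self_iff)
  then show ?thesis by (metis a(2) bit_take_bit_iff not_le)
qed

lemma less_pow_if_bits: "(\<And>j. m \<le> j \<Longrightarrow> \<not> bit (x::nat) j) \<Longrightarrow> x < 2^m"
proof -
  assume a: "\<And>j. m \<le> j \<Longrightarrow> \<not> bit (x::nat) j"
  have "take_bit m x = x" by (rule bit_eqI) (metis a bit_take_bit_iff not_le)
  then show ?thesis by (metis take_bit_nat_less_exp)
qed

lemma bits_sub_le: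
  fixes x y :: nat assumes "\<And>j. bit x j \<Longrightarrow> bit y j" shows "x \<le> y"
  using assms
proof (induction x arbitrary: y rule: less_induct)
  case (less x)
  show ?case
  proof (cases "x = 0")
    case True thus ?thesis by simp
  next
    case False
    have lt: "x div 2 < x" using False by simp
    have "x div 2 \<le> y div 2"
      using less.IH[OF lt, of "y div 2"] less.prems by (metis bit_Suc)
    moreover have "odd x \<Longrightarrow> odd y" using less.prems[of 0] by (simp add: bit_0)
    ultimately show ?thesis by presburger
  qed
qed

lemma bit_less:
  fixes x y :: nat
  assumes "\<And>j. p < j \<Longrightarrow> bit x j = bit y j" "\<not> bit x p" "bit y p"
  shows "x < y"
  using assms
proof (induction p arbitrary: x y)
  case 0
  have "x div 2 = y div 2"
    by (rule bit_eqI) (metis "0.prems"(1) bit_Suc zero_less_Suc)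
  moreover have "even x" "odd y" using 0 by (simp_all add: bit_0)
  ultimately show ?case by presburger
next
  case (Suc p)
  have "x div 2 < y div 2"
    by (rule Suc.IH) (use Suc.prems in \<open>auto simp: bit_Suc[symmetric]\<close>)
  then show ?case by presburger
qed

definition cubeC :: "nat \<Rightarrow> nat set \<Rightarrow> nat set" where
  "cubeC u S = {x. \<forall>j. j \<notin> S \<longrightarrow> bit x j = bit u j}"

lemma cube_pst:
  fixes n k u v :: nat and S :: "nat set"
  assumes nk: "n \<le> 2^Suc k" and Sk: "S \<subseteq> {..k}"
    and Cn: "\<And>x. x \<in> cubeC u S \<Longrightarrow> x < n"
    and vout: "\<And>j. j \<notin> S \<Longrightarrow> bit v j = bit u j"
    and vin: "\<And>j. j \<in> S \<Longrightarrow> bit v j \<noteq> bit u j"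
  shows "\<exists>H. spanning_subgraph n k H \<and> pst n H u v (pi/2)"
proof -
  define C where "C = cubeC u S"
  define E where "E = (\<lambda>x y. x \<in> C \<and> y \<in> C \<and> hypercube_adj k x y)"
  have finS: "finite S" using Sk finite_subset by blast
  have uC: "u \<in> C" and vC: "v \<in> C" using vout by (auto simp: C_def cubeC_def)
  have Cn': "x \<in> C \<Longrightarrow> x < n" for x using Cn C_def by blast
  have sym: "hypercube_adj k x y \<Longrightarrow> hypercube_adj k y x" for x y
  proof -
    assume a: "hypercube_adj k x y"
    have e: "{i. i < Suc k \<and> bit x i \<noteq> bit y i} = {i. i < Suc k \<and> bit y i \<noteq> bit x i}" by blast
    show "hypercube_adj k y x" using a unfolding hypercube_adj_def e .
  qed
  have sg: "spanning_subgraph n k E"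
    unfolding spanning_subgraph_def E_def G_adj_def using Cn' sym by blast
  have high: "\<not> bit x j" if "x \<in> C" "k < j" for x j
    using high_bits[of x "Suc k" j] Cn'[OF that(1)] nk that(2) by simp
  have flipC: "flip_bit i x \<in> C" if "x \<in> C" "i \<in> S" for x i
    using that by (auto simp: C_def cubeC_def bit_flip_bit_iff)
  have nbr: "{y \<in> {..<n}. E x y} = (\<lambda>i. flip_bit i x) ` S" if xC: "x \<in> C" for x
  proof
    show "(\<lambda>i. flip_bit i x) ` S \<subseteq> {y \<in> {..<n}. E x y}"
    proof
      fix y assume "y \<in> (\<lambda>i. flip_bit i x) ` S"
      then obtain i where i: "i \<in> S" "y = flip_bit i x" by blast
      have "{j. j < Suc k \<and> bit x j \<noteq> bit y j} = {i}"
        using i Sk by (auto simp: bit_flip_bit_iff)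
      then have "hypercube_adj k x y" by (simp add: hypercube_adj_def)
      then show "y \<in> {y \<in> {..<n}. E x y}"
        using flipC[OF xC i(1)] i Cn' xC by (auto simp: E_def)
    qed
  next
    show "{y \<in> {..<n}. E x y} \<subseteq> (\<lambda>i. flip_bit i x) ` S"
    proof
      fix y assume "y \<in> {y \<in> {..<n}. E x y}"
      then have yC: "y \<in> C" and adj: "hypercube_adj k x y" by (auto simp: E_def)
      then obtain i where i: "{j. j < Suc k \<and> bit x j \<noteq> bit y j} = {i}"
        unfolding hypercube_adj_def by (meson card_1_singletonE)
      then have ik: "i < Suc k" and ixy: "bit x i \<noteq> bit y i" by auto
      have iS: "i \<in> S"
        using ixy xC yC by (auto simp: C_def cubeC_def)
      have "y = flip_bit i x"
      proof (rule bit_eqI)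
        fix j
        show "bit y j = bit (flip_bit i x) j"
        proof (cases "j < Suc k")
          case True
          have "j \<in> {j. j < Suc k \<and> bit x j \<noteq> bit y j} \<longleftrightarrow> j \<in> {i}" using i by simp
          then have "(bit x j \<noteq> bit y j) = (j = i)" using True by simp
          then show ?thesis by (simp add: bit_flip_bit_iff) blast
        next
          case False
          then show ?thesis using high[OF xC] high[OF yC] ik by (auto simp: bit_flip_bit_iff)
        qed
      qed
      then show "y \<in> (\<lambda>i. flip_bit i x) ` S" using iS by blast
    qed
  qed
  have inj: "inj_on (\<lambda>i. flip_bit i x) S" for x :: nat
  proof (rule inj_onI)
    fix i i' assume "flip_bit i x = flip_bit i' x"
    then have "bit (flip_bit i x) i = bit (flip_bit i' x) i" by simp
    then show "i = i'" by (auto simp: bit_flip_bit_iff split: if_splits)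
  qed
  define c where "c = - (\<i> * complex_of_real (pi/2))"
  define sg where "sg = (\<lambda>(j::nat) (x::nat). if bit x j = bit u j then 1 else -1 :: complex)"
  define \<phi> where "\<phi> = (\<lambda>T x. (if x \<in> C then \<Prod>j\<in>T. sg j x else 0) / 2 ^ card S)"
  define \<mu> where "\<mu> = (\<lambda>T. c * (\<Sum>j\<in>S. if j \<in> T then -1 else 1))"
  define B where "B = c \<cdot>\<^sub>m adj_matrix n E"
  have B: "B \<in> carrier_mat n n" by (simp add: B_def adj_matrix_def)
  have Bent: "B $$ (x,y) = (if E x y then c else 0)" if "x < n" "y < n" for x y
    using that by (simp add: B_def adj_matrix_def)
  have sgflip: "(\<Prod>j\<in>T. sg j (flip_bit i x)) = (if i \<in> T then -1 else 1) * (\<Prod>j\<in>T. sg j x)"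
    if "finite T" for T x i
  proof (cases "i \<in> T")
    case True
    have "(\<Prod>j\<in>T. sg j (flip_bit i x)) = sg i (flip_bit i x) * (\<Prod>j\<in>T-{i}. sg j (flip_bit i x))"
      using True that by (simp add: prod.remove)
    also have "(\<Prod>j\<in>T-{i}. sg j (flip_bit i x)) = (\<Prod>j\<in>T-{i}. sg j x)"
      by (intro prod.cong) (auto simp: sg_def bit_flip_bit_iff)
    also have "sg i (flip_bit i x) = - sg i x" by (auto simp: sg_def bit_flip_bit_iff)
    also have "(\<Prod>j\<in>T. sg j x) = sg i x * (\<Prod>j\<in>T-{i}. sg j x)"
      using True that by (simp add: prod.remove)
    ultimately show ?thesis using True by simp
  next
    case False
    then show ?thesis
      by (simp, intro prod.cong) (auto simp: sg_def bit_flip_bit_iff)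
  qed
  have eig: "(\<Sum>y<n. B $$ (x,y) * \<phi> T y) = \<mu> T * \<phi> T x" if T: "T \<in> Pow S" and x: "x < n" for T x
  proof -
    have finT: "finite T" using T finS finite_subset by auto
    have "(\<Sum>y<n. B $$ (x,y) * \<phi> T y) = (\<Sum>y<n. if E x y then c * \<phi> T y else 0)"
      using x Bent by (intro sum.cong) auto
    also have "\<dots> = (\<Sum>y\<in>{y \<in> {..<n}. E x y}. c * \<phi> T y)"
      by (rule sum.inter_filter[symmetric]) simp
    also have "\<dots> = c * (\<Sum>y\<in>{y \<in> {..<n}. E x y}. \<phi> T y)"
      by (simp add: sum_distrib_left)
    also have "\<dots> = \<mu> T * \<phi> T x"
    proof (cases "x \<in> C")
      case True
      have "(\<Sum>y\<in>{y \<in> {..<n}. E x y}. \<phi> T y) = (\<Sum>i\<in>S. \<phi> T (flip_bit i x))"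
        by (simp only: nbr[OF True] sum.reindex[OF inj] comp_def)
      also have "\<dots> = (\<Sum>i\<in>S. (if i \<in> T then -1 else 1) * \<phi> T x)"
        using True flipC by (intro sum.cong) (auto simp: \<phi>_def sgflip[OF finT])
      finally show ?thesis by (simp add: \<mu>_def sum_distrib_right)
    next
      case False
      then show ?thesis by (simp add: E_def \<phi>_def)
    qed
    finally show ?thesis .
  qed
  have dec: "(\<Sum>T\<in>Pow S. \<phi> T y) = (if y = u then 1 else 0)" if "y < n" for y
  proof (cases "y \<in> C")
    case False
    then show ?thesis using uC by (auto simp: \<phi>_def)
  next
    case True
    have "(\<Sum>T\<in>Pow S. \<Prod>j\<in>T. sg j y) = (\<Prod>j\<in>S. sg j y + 1)"
      using prod_add[OF finS, of "\<lambda>j. sg j y" "\<lambda>_. 1"] by simp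
    also have "\<dots> = (if y = u then 2 ^ card S else 0)"
    proof (cases "y = u")
      case True
      then show ?thesis by (simp add: sg_def)
    next
      case False
      then obtain j where j: "bit y j \<noteq> bit u j" using bit_eqI by blast
      then have "j \<in> S" using True by (auto simp: C_def cubeC_def)
      moreover have "sg j y + 1 = 0" using j by (simp add: sg_def)
      ultimately show ?thesis using False finS by (auto intro: prod_zero)
    qed
    finally show ?thesis using True by (simp add: \<phi>_def sum_divide_distrib[symmetric])
  qed
  have main: "mat_exp B $$ (v,u) = (\<Sum>T\<in>Pow S. exp (\<mu> T) * \<phi> T v)"
    by (rule spectral[OF B _ eig dec]) (use finS Cn' uC vC in auto)
  have trm: "exp (\<mu> T) * \<phi> T v = (\<Prod>j\<in>T. - exp (-c)) * (\<Prod>j\<in>S-T. exp c) / 2 ^ card S"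
    if T: "T \<in> Pow S" for T
  proof -
    have finT: "finite T" using T finS finite_subset by auto
    have "exp (\<mu> T) = (\<Prod>j\<in>S. exp (c * (if j \<in> T then -1 else 1)))"
      by (simp add: \<mu>_def sum_distrib_left exp_sum[OF finS])
    also have "\<dots> = (\<Prod>j\<in>S-T. exp (c * (if j \<in> T then -1 else 1))) * (\<Prod>j\<in>T. exp (c * (if j \<in> T then -1 else 1)))"
      using T finS by (simp add: prod.subset_diff)
    also have "\<dots> = (\<Prod>j\<in>S-T. exp c) * (\<Prod>j\<in>T. exp (-c))"
      by (intro arg_cong2[where f="(*)"] prod.cong) auto
    finally have e: "exp (\<mu> T) = (\<Prod>j\<in>S-T. exp c) * (\<Prod>j\<in>T. exp (-c))" .
    have "(\<Prod>j\<in>T. sg j v) = (\<Prod>j\<in>T. -1)" using T vin by (intro prod.cong) (auto simp: sg_def)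
    then have p: "\<phi> T v = (\<Prod>j\<in>T. -1) / 2 ^ card S"
      using vC by (simp add: \<phi>_def)
    show ?thesis unfolding e p by (simp add: power_mult_distrib[symmetric])
  qed
  have "(\<Sum>T\<in>Pow S. exp (\<mu> T) * \<phi> T v) = (\<Prod>j\<in>S. - exp (-c) + exp c) / 2 ^ card S"
    using prod_add[OF finS, of "\<lambda>_. - exp (-c)" "\<lambda>_. exp c"] trm
    by (simp add: sum_divide_distrib[symmetric])
  also have "\<dots> = ((exp c - exp (-c)) / 2) ^ card S"
    by (simp add: power_divide)
  also have "exp c = - \<i>"
  proof -
    have "exp (\<i> * complex_of_real (pi/2)) = \<i>" using cis_conv_exp[of "pi/2"] by simp
    then show ?thesis by (simp add: c_def exp_minus)
  qed
  also have "exp (-c) = \<i>"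
    using cis_conv_exp[of "pi/2"] by (simp add: c_def)
  finally have "mat_exp B $$ (v,u) = (- \<i>) ^ card S" using main by simp
  then have "pst n E u v (pi/2)"
    by (simp add: pst_def B_def c_def norm_power)
  then show ?thesis using sg by blast
qed


lemma below_k:
  fixes x :: nat assumes "x < 2^Suc k" "\<not> bit x k" shows "x < 2^k"
proof (rule less_pow_if_bits)
  fix j assume "k \<le> j"
  then show "\<not> bit x j" using assms high_bits[of x "Suc k" j] by (cases "j = k") auto
qed

lemma low_hop:
  fixes n k a b :: nat
  assumes "2^k \<le> n" "n \<le> 2^Suc k" "a < 2^k" "b < 2^k"
  shows "\<exists>H. spanning_subgraph n k H \<and> pst n H a b (pi/2)"
proof (rule cube_pst[where S = "{j. j \<le> k \<and> bit a j \<noteq> bit b j}"])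
  have ha: "\<not> bit a j" and hb: "\<not> bit b j" if "k \<le> j" for j
    using high_bits assms that by blast+
  show "n \<le> 2^Suc k" by fact
  show "{j. j \<le> k \<and> bit a j \<noteq> bit b j} \<subseteq> {..k}" by auto
  show "x < n" if "x \<in> cubeC a {j. j \<le> k \<and> bit a j \<noteq> bit b j}" for x
  proof -
    have "x < 2^k"
    proof (rule less_pow_if_bits)
      fix j assume j: "k \<le> j"
      then have "bit x j = bit a j" using that ha[OF j] hb[OF j] by (auto simp: cubeC_def)
      then show "\<not> bit x j" using ha[OF j] by simp
    qed
    then show ?thesis using assms by linarith
  qed
  show "bit b j = bit a j" if "j \<notin> {j. j \<le> k \<and> bit a j \<noteq> bit b j}" for j
    using that ha hb by (cases "k \<le> j") auto
  show "bit b j \<noteq> bit a j" if "j \<in> {j. j \<le> k \<and> bit a j \<noteq> bit b j}" for j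
    using that by auto
qed

lemma sub_hop:
  fixes n k a b m :: nat and S :: "nat set"
  assumes "n \<le> 2^Suc k" "S \<subseteq> {..k}" "m < n"
    and "\<And>j. j \<in> S \<Longrightarrow> bit m j" and "\<And>j. j \<notin> S \<Longrightarrow> bit a j \<Longrightarrow> bit m j"
    and "\<And>j. j \<notin> S \<Longrightarrow> bit b j = bit a j" and "\<And>j. j \<in> S \<Longrightarrow> bit b j \<noteq> bit a j"
  shows "\<exists>H. spanning_subgraph n k H \<and> pst n H a b (pi/2)"
proof (rule cube_pst[OF assms(1,2) _ assms(6,7)])
  fix x assume x: "x \<in> cubeC a S"
  have "x \<le> m"
  proof (rule bits_sub_le)
    fix j assume xj: "bit x j"
    show "bit m j"
    proof (cases "j \<in> S")
      case True then show ?thesis using assms(4) by blast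
    next
      case False
      then have "bit x j = bit a j" using x by (simp add: cubeC_def)
      then show ?thesis using assms(5)[OF False] xj by simp
    qed
  qed
  then show "x < n" using assms(3) by linarith
qed

lemma flip_low:
  fixes x :: nat assumes "x < 2^Suc k" "bit x k" shows "flip_bit k x < 2^k"
proof (rule less_pow_if_bits)
  fix j assume j: "k \<le> j"
  show "\<not> bit (flip_bit k x) j"
  proof (cases "j = k")
    case True then show ?thesis using assms by (simp add: bit_flip_bit_iff)
  next
    case False then have "Suc k \<le> j" using j by simp
    then show ?thesis using high_bits[OF assms(1)] False by (simp add: bit_flip_bit_iff)
  qed
qed

theorem mainTheorem7:
  fixes n k u v :: nat
  assumes "2 ^ k \<le> n" and "n < 2 ^ (k + 1)"
    and "u < n" and "v < n"
  shows "(\<exists>H t0. spanning_subgraph n k H \<and> t0 > 0 \<and> pst n H u v t0)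
       \<or> (\<exists>w H1 H2 t1 t2. w < n \<and> spanning_subgraph n k H1 \<and> spanning_subgraph n k H2
            \<and> t1 > 0 \<and> t2 > 0 \<and> pst n H1 u w t1 \<and> pst n H2 w v t2)"
proof -
  have nk: "n \<le> 2^Suc k" using assms(2) by simp
  have pi2: "(pi/2::real) > 0" by simp
  have uk: "u < 2^Suc k" and vk: "v < 2^Suc k" using assms by simp_all
  have hu: "\<not> bit u j" and hv: "\<not> bit v j" if "k < j" for j
    using high_bits[OF uk, of j] high_bits[OF vk, of j] that by simp_all
  have two: "\<exists>w H1 H2 t1 t2. w < n \<and> spanning_subgraph n k H1 \<and> spanning_subgraph n k H2
            \<and> t1 > 0 \<and> t2 > 0 \<and> pst n H1 u w t1 \<and> pst n H2 w v t2"
    if "w < n" "\<exists>H. spanning_subgraph n k H \<and> pst n H u w (pi/2)"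
       "\<exists>H. spanning_subgraph n k H \<and> pst n H w v (pi/2)" for w
    using that pi2 by blast
  show ?thesis
  proof (cases "bit u k")
    case False
    then have ul: "u < 2^k" using below_k uk by blast
    show ?thesis
    proof (cases "bit v k")
      case False
      then have vl: "v < 2^k" using below_k vk by blast
      show ?thesis using low_hop[OF assms(1) nk ul vl] pi2 by blast
    next
      case True
      define w where "w = flip_bit k v"
      have wl: "w < 2^k" unfolding w_def by (rule flip_low[OF vk True])
      have wn: "w < n" using wl assms by linarith
      show ?thesis
      proof (rule disjI2, rule two[OF wn])
        show "\<exists>H. spanning_subgraph n k H \<and> pst n H u w (pi/2)" by (rule low_hop[OF assms(1) nk ul wl])
        show "\<exists>H. spanning_subgraph n k H \<and> pst n H w v (pi/2)"
          by (rule sub_hop[where S="{k}" and m=v, OF nk _ assms(4)])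
             (auto simp: w_def bit_flip_bit_iff True)
      qed
    qed
  next
    case True
    define w where "w = flip_bit k u"
    have wl: "w < 2^k" unfolding w_def by (rule flip_low[OF uk True])
    have wn: "w < n" using wl assms by linarith
    show ?thesis
    proof (cases "bit v k")
      case False
      then have vl: "v < 2^k" using below_k vk by blast
      show ?thesis
      proof (rule disjI2, rule two[OF wn])
        show "\<exists>H. spanning_subgraph n k H \<and> pst n H w v (pi/2)" by (rule low_hop[OF assms(1) nk wl vl])
        show "\<exists>H. spanning_subgraph n k H \<and> pst n H u w (pi/2)"
          by (rule sub_hop[where S="{k}" and m=u, OF nk _ assms(3)])
             (auto simp: w_def bit_flip_bit_iff True)
      qed
    next
      case vT: True
      show ?thesis
      proof (cases "u = v")
        case True
        have "\<exists>H. spanning_subgraph n k H \<and> pst n H u v (pi/2)"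
          by (rule sub_hop[where S="{}" and m=u, OF nk _ assms(3)]) (auto simp: True)
        then show ?thesis using pi2 by blast
      next
        case False
        define D where "D = {j. j \<le> k \<and> bit u j \<noteq> bit v j}"
        have finD: "finite D" by (simp add: D_def)
        have "D \<noteq> {}"
        proof
          assume "D = {}"
          have "u = v"
          proof (rule bit_eqI)
            fix j show "bit u j = bit v j"
            proof (cases "j \<le> k")
              case True then show ?thesis using \<open>D = {}\<close> by (auto simp: D_def)
            next
              case False then show ?thesis using hu hv by simp
            qed
          qed
          then show False using False by simp
        qed
        define p where "p = Max D"
        have pD: "p \<in> D" using finD \<open>D \<noteq> {}\<close> p_def by simp
        have pk1: "p \<le> k" and pk2: "bit u p \<noteq> bit v p" using pD by (simp_all add: D_def)
        have "p \<noteq> k" using pk2 True vT by blast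
        then have pk: "p < k" using pk1 by simp
        have above: "bit u j = bit v j" if "p < j" for j
        proof (cases "j \<le> k")
          case True
          have "j \<notin> D" using that finD p_def Max_ge not_le by blast
          then show ?thesis using True by (auto simp: D_def)
        next
          case False then show ?thesis using hu hv by simp
        qed
        have bp: "bit u p \<noteq> bit v p" using pD by (simp add: D_def)
        define S1 where "S1 = {j. j < p \<and> bit u j \<noteq> bit v j} \<union> {k}"
        have S1m: "j \<in> S1 \<longleftrightarrow> (j < p \<and> bit u j \<noteq> bit v j) \<or> j = k" for j unfolding S1_def by blast
        have S1k: "S1 \<subseteq> {..k}"
        proof
          fix j assume "j \<in> S1"
          then have "(j < p \<and> bit u j \<noteq> bit v j) \<or> j = k" using S1m by blast
          then show "j \<in> {..k}" using pk by auto
        qed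
        show ?thesis
        proof (cases "bit v p")
          case vp: True
          then have up: "\<not> bit u p" using bp by simp
          define w where "w = flip_bit p (flip_bit k v)"
          have bw: "bit w j = (if j = p \<or> j = k then False else bit v j)" for j
            using vp vT pk by (auto simp: w_def bit_flip_bit_iff)
          have wl: "w < 2^k"
            by (rule less_pow_if_bits) (use bw hv in \<open>auto simp: le_less\<close>)
          have wn: "w < n" using wl assms by linarith
          show ?thesis
          proof (rule disjI2, rule two[OF wn])
            show "\<exists>H. spanning_subgraph n k H \<and> pst n H w v (pi/2)"
            proof (rule sub_hop[where S="{p,k}" and m=v, OF nk _ assms(4)])
              show "{p, k} \<subseteq> {..k}" using pk by auto
              show "bit v j" if "j \<in> {p,k}" for j using that vp vT by auto
              show "bit v j" if "j \<notin> {p,k}" "bit w j" for j using that bw[of j] by simp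
              show "bit v j = bit w j" if "j \<notin> {p,k}" for j using that bw[of j] by simp
              show "bit v j \<noteq> bit w j" if "j \<in> {p,k}" for j using that bw[of j] vp vT by auto
            qed
            show "\<exists>H. spanning_subgraph n k H \<and> pst n H u w (pi/2)"
            proof (rule cube_pst[where S=S1, OF nk S1k])
              show "bit w j = bit u j" if "j \<notin> S1" for j
              proof -
                have jk: "j \<noteq> k" using that S1m by auto
                consider "j = p" | "p < j" | "j < p" by linarith
                then show ?thesis
                proof cases
                  case 1 then show ?thesis using bw[of j] up jk by simp
                next
                  case 2 then show ?thesis using bw[of j] above[of j] jk pk by simp
                next
                  case 3
                then have "bit u j = bit v j" using that S1m by auto
                then show ?thesis using bw[of j] 3 jk pk by simp
                qed
              qed
              show "bit w j \<noteq> bit u j" if "j \<in> S1" for j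
              proof -
                have "(j < p \<and> bit u j \<noteq> bit v j) \<or> j = k" using that S1m by blast
                then show ?thesis
                proof
                  assume "j < p \<and> bit u j \<noteq> bit v j" then show ?thesis using bw[of j] pk by auto
                next
                  assume "j = k" then show ?thesis using bw[of j] True by simp
                qed
              qed
              fix x assume x: "x \<in> cubeC u S1"
              have xo: "j \<notin> S1 \<Longrightarrow> bit x j = bit u j" for j using x by (simp add: cubeC_def)
              have xk: "\<not> bit x j" if "k < j" for j
              proof -
                have "j \<notin> S1" using that pk S1m by auto
                then show ?thesis using xo[of j] hu[OF that] by simp
              qed
              show "x < n"
              proof (cases "bit x k")
                case False
                have "x < 2^k" by (rule less_pow_if_bits) (use False xk in \<open>auto simp: le_less\<close>)
                then show ?thesis using assms by linarith
              next
                case xkT: True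
                have "x < v"
                proof (rule bit_less[of p])
                  show "bit x j = bit v j" if "p < j" for j
                  proof (cases "j = k")
                    case True then show ?thesis using xkT vT by simp
                  next
                    case False
                    then have "j \<notin> S1" using that S1m by auto
                    then show ?thesis using xo[of j] above[OF that] by simp
                  qed
                  have "p \<notin> S1" using pk S1m by auto
                  then show "\<not> bit x p" using xo[of p] up by simp
                  show "bit v p" by fact
                qed
                then show ?thesis using assms by linarith
              qed
            qed
          qed
        next
          case vp: False
          then have up: "bit u p" using bp by simp
          define w where "w = flip_bit p (flip_bit k u)"
          have bw: "bit w j = (if j = p \<or> j = k then False else bit u j)" for j
            using up True pk by (auto simp: w_def bit_flip_bit_iff)
          have wl: "w < 2^k"
            by (rule less_pow_if_bits) (use bw hu in \<open>auto simp: le_less\<close>)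
          have wn: "w < n" using wl assms by linarith
          show ?thesis
          proof (rule disjI2, rule two[OF wn])
            show "\<exists>H. spanning_subgraph n k H \<and> pst n H u w (pi/2)"
            proof (rule sub_hop[where S="{p,k}" and m=u, OF nk _ assms(3)])
              show "{p, k} \<subseteq> {..k}" using pk by auto
              show "bit u j" if "j \<in> {p,k}" for j using that up True by auto
              show "bit u j" if "j \<notin> {p,k}" "bit u j" for j using that by simp
              show "bit w j = bit u j" if "j \<notin> {p,k}" for j using that bw[of j] by simp
              show "bit w j \<noteq> bit u j" if "j \<in> {p,k}" for j using that bw[of j] up True by auto
            qed
            show "\<exists>H. spanning_subgraph n k H \<and> pst n H w v (pi/2)"
            proof (rule cube_pst[where S=S1, OF nk S1k])
              show "bit v j = bit w j" if "j \<notin> S1" for j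
              proof -
                have jk: "j \<noteq> k" using that S1m by auto
                consider "j = p" | "p < j" | "j < p" by linarith
                then show ?thesis
                proof cases
                  case 1 then show ?thesis using bw[of j] vp jk by simp
                next
                  case 2 then show ?thesis using bw[of j] above[of j] jk pk by simp
                next
                  case 3
                then have "bit u j = bit v j" using that S1m by auto
                then show ?thesis using bw[of j] 3 jk pk by simp
                qed
              qed
              show "bit v j \<noteq> bit w j" if "j \<in> S1" for j
              proof -
                have "(j < p \<and> bit u j \<noteq> bit v j) \<or> j = k" using that S1m by blast
                then show ?thesis
                proof
                  assume "j < p \<and> bit u j \<noteq> bit v j" then show ?thesis using bw[of j] pk by auto
                next
                  assume "j = k" then show ?thesis using bw[of j] vT by simp
                qed
              qed
              fix x assume x: "x \<in> cubeC w S1"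
              have xo: "j \<notin> S1 \<Longrightarrow> bit x j = bit w j" for j using x by (simp add: cubeC_def)
              have xk: "\<not> bit x j" if "k < j" for j
              proof -
                have "j \<notin> S1" using that pk S1m by auto
                then show ?thesis using xo[of j] bw[of j] hu[OF that] that pk by simp
              qed
              show "x < n"
              proof (cases "bit x k")
                case False
                have "x < 2^k" by (rule less_pow_if_bits) (use False xk in \<open>auto simp: le_less\<close>)
                then show ?thesis using assms by linarith
              next
                case xkT: True
                have "x < u"
                proof (rule bit_less[of p])
                  show "bit x j = bit u j" if "p < j" for j
                  proof (cases "j = k")
                    case jk: True then show ?thesis using xkT True by simp
                  next
                    case False
                    then have "j \<notin> S1" using that S1m by auto
                    then show ?thesis using xo[of j] bw[of j] that False by simp
                  qed
                  have "p \<notin> S1" using pk S1m by auto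
                  then show "\<not> bit x p" using xo[of p] bw[of p] by simp
                  show "bit u p" by fact
                qed
                then show ?thesis using assms by linarith
              qed
            qed
          qed
        qed
      qed
    qed
  qed
qed

end
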